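(* Let $\Sigma$ be a graded alphabet, $t\in T_\Sigma$, and $A_t=(\Sigma,Q,\nu,\delta)$ the subtree automaton of $t$. Then for every tree $r\in\mathrm{SubTree}(t)$, $\Delta(r)=\{r'\in Q\mid\mathrm{h}(r')=r\}$.
   Context: A graded alphabet is a finite set $\Sigma=\bigcup_{k\in\mathbb{N}}\Sigma_k$; $T_\Sigma$ is the set of trees $f(t_1,\ldots,t_k)$ with $f\in\Sigma_k$. A RWTA is $A=(\Sigma,Q,\nu,\delta)$ with $Q$ finite, $\nu:Q\to\mathbb{N}$, $\delta\subseteq\bigcup_k Q\times\Sigma_k\times Q^k$; $\delta(f,q_1,\ldots,q_k)=\{q\mid(q,f,q_1,\ldots,q_k)\in\delta\}$, extended to subsets by union over tuples; $\Delta(f(t_1,\ldots,t_k))=\delta(f,\Delta(t_1),\ldots,\Delta(t_k))$. For $t=f(t_1,\ldots,t_k)$, $\mathrm{SubTree}(t)=\{t\}\cup\bigcup_j\mathrm{SubTree}(t_j)$. The tree $t^\sharp$ is obtained from $t$ by indexing each symbol occurrence with its position in a preorder traversal (indexed symbols are distinct and keep their arity); $\Sigma_{t^\sharp}$ is the set of indexed symbols of $t^\sharp$; $\mathrm{h}$ erases indices (on symbols and trees). The subtree automaton of $t$ is $A_t=(\Sigma,Q,\nu,\delta)$ with $Q=\mathrm{SubTree}(t^\sharp)$, $\nu\equiv1$, and for $f\in\Sigma_{t^\sharp}$ of arity $k$ and $t_1,\ldots,t_{k+1}\in Q$: $t_{k+1}\in\delta(\mathrm{h}(f),t_1,\ldots,t_k)$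 iff $t_{k+1}=f(t_1,\ldots,t_k)$. *)

theory Defs
  imports Main
begin

datatype 'a tree = Node 'a "'a tree list"

(* T_Sigma: trees over the graded alphabet (Sigma, ar), Sigma_k = {f : Sigma. ar f = k} *)
fun wf_tree :: "'a set \<Rightarrow> ('a \<Rightarrow> nat) \<Rightarrow> 'a tree \<Rightarrow> bool" where
  "wf_tree \<Sigma> ar (Node f ts) =
     (f \<in> \<Sigma> \<and> length ts = ar f \<and> (\<forall>t \<in> set ts. wf_tree \<Sigma> ar t))"

fun SubTree :: "'a tree \<Rightarrow> 'a tree set" where
  "SubTree (Node f ts) = insert (Node f ts) (\<Union>t \<in> set ts. SubTree t)"

fun labels :: "'a tree \<Rightarrow> 'a set" where
  "labels (Node f ts) = insert f (\<Union>t \<in> set ts. labels t)"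

fun tsize :: "'a tree \<Rightarrow> nat" where
  "tsize (Node f ts) = Suc (sum_list (map tsize ts))"

fun idx :: "nat \<Rightarrow> 'a tree \<Rightarrow> ('a \<times> nat) tree"
and idx_list :: "nat \<Rightarrow> 'a tree list \<Rightarrow> ('a \<times> nat) tree list" where
  "idx n (Node f ts) = Node (f, n) (idx_list (Suc n) ts)"
| "idx_list n [] = []"
| "idx_list n (t # ts) = idx n t # idx_list (n + tsize t) ts"

(* t^sharp: positions in preorder, numbered from 1 *)
definition sharp :: "'a tree \<Rightarrow> ('a \<times> nat) tree" where
  "sharp t = idx 1 t"

definition h_sym :: "'a \<times> nat \<Rightarrow> 'a" where
  "h_sym f = fst f"

definition h :: "('a \<times> nat) tree \<Rightarrow> 'a tree" where
  "h t = map_tree h_sym t"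

(* RWTA (Sigma, Q, nu, delta); a transition (q, f, [q_1,...,q_k]) stands for the tuple (q, f, q_1, ..., q_k) *)
record ('a, 'q) rwta =
  alph :: "'a set"
  states :: "'q set"
  nu :: "'q \<Rightarrow> nat"
  trans :: "('q \<times> 'a \<times> 'q list) set"

(* Delta(f(t_1,...,t_k)) = delta(f, Delta(t_1), ..., Delta(t_k)), with delta extended to sets
   by union over all tuples in Delta(t_1) x ... x Delta(t_k) *)
fun Delta :: "('q \<times> 'a \<times> 'q list) set \<Rightarrow> 'a tree \<Rightarrow> 'q set" where
  "Delta \<delta> (Node f ts) =
     {q. \<exists>qs \<in> listset (map (Delta \<delta>) ts). (q, f, qs) \<in> \<delta>}"

definition subtree_aut :: "'a set \<Rightarrow> ('a \<Rightarrow> nat) \<Rightarrow> 'a tree \<Rightarrow> ('a, ('a \<times> nat) tree) rwta" where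
  "subtree_aut \<Sigma> ar t =
     \<lparr> alph = \<Sigma>,
       states = SubTree (sharp t),
       nu = (\<lambda>_. 1),
       trans = {(q, h_sym f, qs) | q f qs.
                  f \<in> labels (sharp t) \<and> length qs = ar (h_sym f) \<and>
                  set qs \<subseteq> SubTree (sharp t) \<and> q \<in> SubTree (sharp t) \<and>
                  q = Node f qs} \<rparr>"

end

theory Submission
  imports Defs
begin

lemma in_listset_iff: "xs \<in> listset As \<longleftrightarrow> list_all2 (\<in>) xs As"
proof (induction As arbitrary: xs)
  case Nil then show ?case by auto
next
  case (Cons A As) then show ?case
    by (cases xs) (auto simp: set_Cons_def)
qed

lemma SubTree_self: "t \<in> SubTree t"
  by (cases t) auto

lemma SubTree_trans: "s \<in> SubTree u \<Longrightarrow> u \<in> SubTree t \<Longrightarrow> s \<in> SubTree t"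
proof (induction t)
  case (Node f ts) then show ?case by auto
qed

lemma SubTree_child: "Node f qs \<in> SubTree t \<Longrightarrow> x \<in> set qs \<Longrightarrow> x \<in> SubTree t"
proof -
  assume a: "Node f qs \<in> SubTree t" "x \<in> set qs"
  have "x \<in> SubTree (Node f qs)" using a(2) SubTree_self[of x] by auto
  then show ?thesis using SubTree_trans a(1) by blast
qed

lemma SubTree_label: "Node f qs \<in> SubTree t \<Longrightarrow> f \<in> labels t"
proof (induction t)
  case (Node g ts) then show ?case by auto
qed

lemma SubTree_wf: "s \<in> SubTree t \<Longrightarrow> wf_tree \<Sigma> ar t \<Longrightarrow> wf_tree \<Sigma> ar s"
proof (induction t)
  case (Node g ts) then show ?case by auto
qed

lemma h_Node: "h (Node f qs) = Node (h_sym f) (map h qs)"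
  by (simp add: h_def)

theorem lemma7:
  fixes \<Sigma> :: "'a set" and ar :: "'a \<Rightarrow> nat" and t r :: "'a tree"
  assumes "finite \<Sigma>"
    and "wf_tree \<Sigma> ar t"
    and "r \<in> SubTree t"
  shows "Delta (trans (subtree_aut \<Sigma> ar t)) r
           = {r' \<in> states (subtree_aut \<Sigma> ar t). h r' = r}"
  using assms(3)
proof (induction r)
  case (Node g ts)
  let ?T = "SubTree (sharp t)"
  let ?d = "trans (subtree_aut \<Sigma> ar t)"
  have st: "states (subtree_aut \<Sigma> ar t) = ?T" by (simp add: subtree_aut_def)
  have IH: "\<And>x. x \<in> set ts \<Longrightarrow> Delta ?d x = {r' \<in> ?T. h r' = x}"
  proof -
    fix x assume x: "x \<in> set ts"
    have "x \<in> SubTree t" using SubTree_child[OF Node.prems x] .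
    then show "Delta ?d x = {r' \<in> ?T. h r' = x}" using Node.IH[OF x] st by simp
  qed
  have wf: "length ts = ar g"
    using SubTree_wf[OF Node.prems assms(2)] by simp
  show ?case
  proof (intro set_eqI iffI)
    fix q assume "q \<in> Delta ?d (Node g ts)"
    then obtain qs where qs: "qs \<in> listset (map (Delta ?d) ts)" and tr: "(q, g, qs) \<in> ?d"
      by auto
    from tr obtain f where f: "g = h_sym f" "q \<in> ?T" "q = Node f qs"
      by (auto simp: subtree_aut_def)
    from qs have la: "list_all2 (\<in>) qs (map (Delta ?d) ts)" by (simp add: in_listset_iff)
    have "map h qs = ts"
    proof (rule nth_equalityI)
      show "length (map h qs) = length ts" using la by (simp add: list_all2_lengthD)
    next
      fix i assume "i < length (map h qs)"
      then have i: "i < length ts" using la by (simp add: list_all2_lengthD)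
      have "qs ! i \<in> Delta ?d (ts ! i)" using la i by (auto simp: list_all2_conv_all_nth)
      then show "map h qs ! i = ts ! i" using IH[of "ts ! i"] i la
        by (auto simp: list_all2_lengthD)
    qed
    then show "q \<in> {r' \<in> states (subtree_aut \<Sigma> ar t). h r' = Node g ts}"
      using f by (simp add: subtree_aut_def h_Node)
  next
    fix q assume "q \<in> {r' \<in> states (subtree_aut \<Sigma> ar t). h r' = Node g ts}"
    then have qT: "q \<in> ?T" and hq: "h q = Node g ts" by (auto simp: subtree_aut_def)
    obtain f qs where q: "q = Node f qs" by (cases q)
    from hq q have g: "g = h_sym f" and m: "map h qs = ts" by (auto simp: h_Node)
    have len: "length qs = length ts" using m by auto
    have "list_all2 (\<in>) qs (map (Delta ?d) ts)"
    proof (simp add: list_all2_conv_all_nth len, intro allI impI)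
      fix i assume i: "i < length ts"
      have "qs ! i \<in> set qs" using i len by simp
      then have "qs ! i \<in> ?T" using SubTree_child[of f qs "sharp t"] qT q by simp
      moreover have "h (qs ! i) = ts ! i" using m i len nth_map[of i qs h] by simp
      ultimately show "qs ! i \<in> Delta ?d (ts ! i)" using IH[of "ts ! i"] i by simp
    qed
    then have qs: "qs \<in> listset (map (Delta ?d) ts)" by (simp add: in_listset_iff)
    have "(q, g, qs) \<in> ?d"
      using qT q g len wf SubTree_label[of f qs "sharp t"] SubTree_child[of f qs "sharp t"]
      by (cases f) (auto simp: subtree_aut_def)
    then show "q \<in> Delta ?d (Node g ts)" using qs by auto
  qed
qed

end
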